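(* Let $k\geq 2$ and let $G$ be a bipartite graph of order $n\geq 11k-4$ that does not contain $k\cdot P_3$ as a subgraph. Then $\rho(G)\leq \sqrt{(k-1)(n-k+1)}$, with equality if and only if $G=K_{k-1,n-k+1}$.
   Context: Graphs are finite and simple; $\rho(G)$ is the largest eigenvalue of the adjacency matrix of $G$. $P_3$ is the path on 3 vertices and $k\cdot P_3$ is the disjoint union of $k$ copies of $P_3$. $K_{a,b}$ is the complete bipartite graph with parts of sizes $a$ and $b$. *)

theory Defs
  imports Complex_Main
begin

definition simple_graph :: "nat \<Rightarrow> (nat \<Rightarrow> nat \<Rightarrow> bool) \<Rightarrow> bool" where
  "simple_graph n E \<longleftrightarrow>
     (\<forall>u v. E u v \<longrightarrow> u < n \<and> v < n \<and> u \<noteq> v \<and> E v u)"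

definition adj :: "(nat \<Rightarrow> nat \<Rightarrow> bool) \<Rightarrow> nat \<Rightarrow> nat \<Rightarrow> real" where
  "adj E i j = (if E i j then 1 else 0)"

definition adj_eigenvalue :: "nat \<Rightarrow> (nat \<Rightarrow> nat \<Rightarrow> bool) \<Rightarrow> real \<Rightarrow> bool" where
  "adj_eigenvalue n E lam \<longleftrightarrow>
     (\<exists>x :: nat \<Rightarrow> real. (\<exists>i<n. x i \<noteq> 0) \<and>
        (\<forall>i<n. (\<Sum>j<n. adj E i j * x j) = lam * x i))"

definition spec_radius :: "nat \<Rightarrow> (nat \<Rightarrow> nat \<Rightarrow> bool) \<Rightarrow> real" where
  "spec_radius n E = Max {lam. adj_eigenvalue n E lam}"

definition bipartite_graph :: "(nat \<Rightarrow> nat \<Rightarrow> bool) \<Rightarrow> bool" where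
  "bipartite_graph E \<longleftrightarrow> (\<exists>c :: nat \<Rightarrow> bool. \<forall>u v. E u v \<longrightarrow> c u \<noteq> c v)"

text \<open>G contains k disjoint copies of P_3 as a (not necessarily induced) subgraph:
  vertices p i 0 - p i 1 - p i 2 for i < k, all 3k of them distinct.\<close>
definition contains_kP3 :: "nat \<Rightarrow> nat \<Rightarrow> (nat \<Rightarrow> nat \<Rightarrow> bool) \<Rightarrow> bool" where
  "contains_kP3 k n E \<longleftrightarrow>
     (\<exists>p :: nat \<Rightarrow> nat \<Rightarrow> nat.
        inj_on (\<lambda>(i, j). p i j) ({..<k} \<times> {..<3}) \<and>
        (\<forall>i<k. \<forall>j<3. p i j < n) \<and>
        (\<forall>i<k. E (p i 0) (p i 1) \<and> E (p i 1) (p i 2)))"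

definition is_complete_bipartite :: "nat \<Rightarrow> nat \<Rightarrow> nat \<Rightarrow> (nat \<Rightarrow> nat \<Rightarrow> bool) \<Rightarrow> bool" where
  "is_complete_bipartite a b n E \<longleftrightarrow>
     (\<exists>S. S \<subseteq> {..<n} \<and> card S = a \<and> card ({..<n} - S) = b \<and>
        (\<forall>u v. E u v \<longleftrightarrow> (u < n \<and> v < n \<and> (u \<in> S \<longleftrightarrow> v \<notin> S))))"

end

theory Submission
  imports Defs "Jordan_Normal_Form.Spectral_Radius"
begin

definition AM :: "nat \<Rightarrow> (nat \<Rightarrow> nat \<Rightarrow> bool) \<Rightarrow> real mat" where
  "AM n E = mat n n (\<lambda>(i,j). adj E i j)"

lemma ev_to_jnf:
  assumes "adj_eigenvalue n E lam"
  shows "eigenvalue (AM n E) lam"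
proof -
  from assms obtain x where x0: "\<exists>i<n. x i \<noteq> 0"
    and ev: "\<forall>i<n. (\<Sum>j<n. adj E i j * x j) = lam * x i"
    unfolding adj_eigenvalue_def by blast
  define v where "v = vec n x"
  have "v \<noteq> 0\<^sub>v n" using x0 unfolding v_def by (metis index_vec index_zero_vec(1))
  moreover have "AM n E *\<^sub>v v = lam \<cdot>\<^sub>v v"
  proof (rule eq_vecI)
    fix i assume "i < dim_vec (lam \<cdot>\<^sub>v v)"
    hence i: "i < n" by (simp add: v_def)
    have "(AM n E *\<^sub>v v) $ i = (\<Sum>j<n. adj E i j * x j)"
      using i by (simp add: AM_def v_def scalar_prod_def lessThan_atLeast0)
    also have "\<dots> = lam * x i" using ev i by blast
    finally show "(AM n E *\<^sub>v v) $ i = (lam \<cdot>\<^sub>v v) $ i" using i by (simp add: v_def)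
  qed (simp add: AM_def v_def)
  ultimately show ?thesis
    unfolding eigenvalue_def eigenvector_def by (intro exI[of _ v]) (simp add: AM_def v_def)
qed

lemma finite_eig: "finite {lam. adj_eigenvalue n E lam}"
proof -
  have "AM n E \<in> carrier_mat n n" by (simp add: AM_def)
  from card_finite_spectrum(1)[OF this] show ?thesis
    by (rule finite_subset[rotated]) (auto simp: spectrum_def ev_to_jnf)
qed

lemma exists_eig:
  assumes n: "n > 0" and sym: "\<And>u v. E u v \<Longrightarrow> E v u"
  shows "\<exists>lam. adj_eigenvalue n E lam"
proof -
  define C where "C = map_mat complex_of_real (AM n E)"
  have C: "C \<in> carrier_mat n n" by (simp add: C_def AM_def)
  from spectrum_non_empty[OF C n] obtain mu where "eigenvalue C mu"
    unfolding spectrum_def by auto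
  then obtain v where v: "v \<in> carrier_vec n" "v \<noteq> 0\<^sub>v n" "C *\<^sub>v v = mu \<cdot>\<^sub>v v"
    unfolding eigenvalue_def eigenvector_def using C by auto
  define z where "z i = v $ i" for i
  have evz: "(\<Sum>j<n. complex_of_real (adj E i j) * z j) = mu * z i" if i: "i < n" for i
  proof -
    have "(C *\<^sub>v v) $ i = (mu \<cdot>\<^sub>v v) $ i" using v(3) by simp
    thus ?thesis using i v(1) by (simp add: C_def AM_def z_def scalar_prod_def lessThan_atLeast0)
  qed
  obtain i0 where i0: "i0 < n" "z i0 \<noteq> 0"
    using v(1,2) unfolding z_def by (metis carrier_vecD eq_vecI index_zero_vec(1,2))
  have adjsym: "adj E i j = adj E j i" for i j using sym unfolding adj_def by auto
  have evc: "(\<Sum>j<n. complex_of_real (adj E i j) * cnj (z j)) = cnj mu * cnj (z i)" if i: "i < n" for i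
  proof -
    have "cnj (\<Sum>j<n. complex_of_real (adj E i j) * z j) = cnj (mu * z i)" using evz[OF i] by simp
    thus ?thesis by (simp add: cnj_sum)
  qed
  define L where "L = (\<Sum>i<n. cnj (z i) * (\<Sum>j<n. complex_of_real (adj E i j) * z j))"
  define L' where "L' = (\<Sum>i<n. z i * (\<Sum>j<n. complex_of_real (adj E i j) * cnj (z j)))"
  define S where "S = (\<Sum>i<n. cnj (z i) * z i)"
  have "L = L'"
  proof -
    have "L = (\<Sum>i<n. \<Sum>j<n. complex_of_real (adj E i j) * cnj (z i) * z j)"
      unfolding L_def by (simp add: sum_distrib_left mult_ac)
    also have "\<dots> = (\<Sum>j<n. \<Sum>i<n. complex_of_real (adj E i j) * cnj (z i) * z j)"
      by (rule sum.swap)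
    also have "\<dots> = L'"
      unfolding L'_def by (simp add: sum_distrib_left mult_ac adjsym)
    finally show ?thesis .
  qed
  moreover have "L = mu * S"
  proof -
    have "L = (\<Sum>i<n. cnj (z i) * (mu * z i))" unfolding L_def
      by (rule sum.cong) (simp_all add: evz)
    thus ?thesis unfolding S_def by (simp add: sum_distrib_left mult_ac)
  qed
  moreover have "L' = cnj mu * S"
  proof -
    have "L' = (\<Sum>i<n. z i * (cnj mu * cnj (z i)))" unfolding L'_def
      by (rule sum.cong) (simp_all add: evc)
    thus ?thesis unfolding S_def by (simp add: sum_distrib_left mult_ac)
  qed
  moreover have "S \<noteq> 0"
  proof -
    have "Re S = (\<Sum>i<n. (Re (z i))\<^sup>2 + (Im (z i))\<^sup>2)" unfolding S_def
      by (simp add: Re_sum power2_eq_square sum.distrib)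
    also have "\<dots> > 0"
    proof (rule sum_pos2[of _ i0])
      show "(Re (z i0))\<^sup>2 + (Im (z i0))\<^sup>2 > 0" using i0
        by (simp add: cmod_power2[symmetric])
    qed (use i0 in auto)
    finally show ?thesis by auto
  qed
  ultimately have "mu = cnj mu" by simp
  hence im: "Im mu = 0" by (metis cnj.simps(2) complex.expand neg_equal_zero)
  have reeq: "(\<Sum>j<n. adj E i j * Re (z j)) = Re mu * Re (z i)"
    and imeq: "(\<Sum>j<n. adj E i j * Im (z j)) = Re mu * Im (z i)" if i: "i < n" for i
  proof -
    have "Re (\<Sum>j<n. complex_of_real (adj E i j) * z j) = Re (mu * z i)" using evz[OF i] by simp
    thus "(\<Sum>j<n. adj E i j * Re (z j)) = Re mu * Re (z i)" using im by (simp add: Re_sum)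
    have "Im (\<Sum>j<n. complex_of_real (adj E i j) * z j) = Im (mu * z i)" using evz[OF i] by simp
    thus "(\<Sum>j<n. adj E i j * Im (z j)) = Re mu * Im (z i)" using im by (simp add: Im_sum)
  qed
  show ?thesis
  proof (cases "Re (z i0) = 0")
    case True
    hence "Im (z i0) \<noteq> 0" using i0 complex.expand by auto
    thus ?thesis unfolding adj_eigenvalue_def using imeq i0
      by (intro exI[of _ "Re mu"] exI[of _ "\<lambda>j. Im (z j)"]) auto
  next
    case False
    thus ?thesis unfolding adj_eigenvalue_def using reeq i0
      by (intro exI[of _ "Re mu"] exI[of _ "\<lambda>j. Re (z j)"]) auto
  qed
qed

lemma my_CS:
  fixes a b :: "'a \<Rightarrow> real"
  shows "(\<Sum>i\<in>I. a i * b i)\<^sup>2 \<le> (\<Sum>i\<in>I. (a i)\<^sup>2) * (\<Sum>i\<in>I. (b i)\<^sup>2)"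
proof (cases "(\<Sum>i\<in>I. (b i)\<^sup>2) > 0")
  case False
  then consider "\<And>i. i\<in>I \<Longrightarrow> b i = 0" | "infinite I"
    by (metis (mono_tags, lifting) sum_pos2 zero_le_power2 zero_less_power2)
  thus ?thesis
    by fastforce
next
  case True
  define r where "r \<equiv> (\<Sum>i\<in>I. a i * b i) / (\<Sum>i\<in>I. (b i)\<^sup>2)"
  have "0 \<le> (\<Sum>i\<in>I. (a i - r * b i)\<^sup>2)"
    by (simp add: sum_nonneg)
  also have "... = (\<Sum>i\<in>I. (a i)\<^sup>2 - 2 * r * (a i * b i) + r\<^sup>2 * (b i)\<^sup>2)"
    by (rule sum.cong) (simp_all add: power2_eq_square left_diff_distrib right_diff_distrib)
  also have "... = (\<Sum>i\<in>I. (a i)\<^sup>2) - 2 * r * (\<Sum>i\<in>I. a i * b i) + r\<^sup>2 * (\<Sum>i\<in>I. (b i)\<^sup>2)"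
    by (simp only: sum.distrib sum_subtractf sum_distrib_left)
  also have "\<dots> = (\<Sum>i\<in>I. (a i)\<^sup>2) - ((\<Sum>i\<in>I. a i * b i))\<^sup>2 / (\<Sum>i\<in>I. (b i)\<^sup>2)"
    by (simp add: r_def power2_eq_square)
  finally have "0 \<le> (\<Sum>i\<in>I. (a i)\<^sup>2) - ((\<Sum>i\<in>I. a i * b i))\<^sup>2 / (\<Sum>i\<in>I. (b i)\<^sup>2)" .
  hence "((\<Sum>i\<in>I. a i * b i))\<^sup>2 / (\<Sum>i\<in>I. (b i)\<^sup>2) \<le> (\<Sum>i\<in>I. (a i)\<^sup>2)"
    by (simp add: le_diff_eq)
  thus "((\<Sum>i\<in>I. a i * b i))\<^sup>2 \<le> (\<Sum>i\<in>I. (a i)\<^sup>2) * (\<Sum>i\<in>I. (b i)\<^sup>2)"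
    by (simp add: pos_divide_le_eq True)
qed

lemma adj_sq: "adj E i j * adj E i j = adj E i j" by (simp add: adj_def)
lemma adj_pow2: "(adj E i j)\<^sup>2 = adj E i j" by (simp add: adj_def)
lemma adj_mult_sq: "(adj E i j * y)\<^sup>2 = adj E i j * y\<^sup>2" by (simp add: adj_def)
lemma adj_nonneg: "adj E i j \<ge> 0" by (simp add: adj_def)

locale eigsetup =
  fixes n :: nat and E :: "nat \<Rightarrow> nat \<Rightarrow> bool" and c :: "nat \<Rightarrow> bool"
    and x :: "nat \<Rightarrow> real" and lam :: real
  assumes sym: "\<And>u v. E u v \<Longrightarrow> E v u"
    and col: "\<And>u v. E u v \<Longrightarrow> c u \<noteq> c v"
    and ev: "\<And>i. i < n \<Longrightarrow> (\<Sum>j<n. adj E i j * x j) = lam * x i"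
begin

definition "SX = (\<Sum>i<n. if c i then (x i)\<^sup>2 else 0)"
definition "SY = (\<Sum>i<n. if c i then 0 else (x i)\<^sup>2)"
definition "dg i = (\<Sum>j<n. adj E i j)"
definition "mX = (\<Sum>i<n. if c i then dg i else 0)"
definition "NY i = (\<Sum>j<n. adj E i j * (x j)\<^sup>2)"

lemma adj_col: "adj E i j \<noteq> 0 \<Longrightarrow> c i \<noteq> c j"
  using col by (auto simp: adj_def split: if_splits)

lemma adjsym: "adj E i j = adj E j i" using sym unfolding adj_def by auto

lemma SX_SY: assumes "lam \<noteq> 0" shows "SX = SY"
proof -
  have "lam * SX = (\<Sum>i<n. \<Sum>j<n. (if c i then adj E i j * x i * x j else 0))"
    unfolding SX_def sum_distrib_left
  proof (rule sum.cong)
    fix i assume "i \<in> {..<n}"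
    hence "lam * x i = (\<Sum>j<n. adj E i j * x j)" using ev by simp
    hence "lam * (x i * x i) = (\<Sum>j<n. adj E i j * x j) * x i"
      by (simp add: mult.assoc[symmetric])
    also have "\<dots> = (\<Sum>j<n. adj E i j * x i * x j)"
      by (subst sum_distrib_right) (simp add: mult_ac)
    finally have "lam * (x i * x i) = (\<Sum>j<n. adj E i j * x i * x j)" .
    thus "lam * (if c i then (x i)\<^sup>2 else 0) = (\<Sum>j<n. if c i then adj E i j * x i * x j else 0)"
      by (simp add: power2_eq_square)
  qed simp
  also have "\<dots> = (\<Sum>j<n. \<Sum>i<n. (if c i then adj E i j * x i * x j else 0))"
    by (rule sum.swap)
  also have "\<dots> = (\<Sum>j<n. \<Sum>i<n. (if c j then 0 else adj E j i * x j * x i))"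
    by (intro sum.cong refl) (use adj_col adjsym in \<open>fastforce simp: mult_ac\<close>)
  also have "\<dots> = lam * SY"
    unfolding SY_def sum_distrib_left
  proof (rule sum.cong)
    fix i assume "i \<in> {..<n}"
    hence "lam * x i = (\<Sum>j<n. adj E i j * x j)" using ev by simp
    hence "lam * (x i * x i) = (\<Sum>j<n. adj E i j * x j) * x i"
      by (simp add: mult.assoc[symmetric])
    also have "\<dots> = (\<Sum>j<n. adj E i j * x i * x j)"
      by (subst sum_distrib_right) (simp add: mult_ac)
    finally have "lam * (x i * x i) = (\<Sum>j<n. adj E i j * x i * x j)" .
    thus "(\<Sum>j<n. if c i then 0 else adj E i j * x i * x j) = lam * (if c i then 0 else (x i)\<^sup>2)"
      by (simp add: power2_eq_square)
  qed simp
  finally show ?thesis using assms by simp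
qed

lemma dg_nonneg: "dg i \<ge> 0" unfolding dg_def by (simp add: sum_nonneg adj_nonneg)

lemma term1: assumes "i < n" shows "(lam * x i)\<^sup>2 \<le> dg i * NY i"
proof -
  have "(lam * x i)\<^sup>2 = (\<Sum>j<n. adj E i j * (adj E i j * x j))\<^sup>2"
    using ev[OF assms] by (simp add: adj_sq mult.assoc[symmetric])
  also have "\<dots> \<le> (\<Sum>j<n. (adj E i j)\<^sup>2) * (\<Sum>j<n. (adj E i j * x j)\<^sup>2)"
    by (rule my_CS)
  also have "\<dots> = dg i * NY i"
    unfolding dg_def NY_def by (simp only: adj_pow2 adj_mult_sq)
  finally show ?thesis .
qed

lemma NY_le: assumes "c i" shows "NY i \<le> SY"
  unfolding NY_def SY_def
proof (rule sum_mono)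
  fix j assume "j \<in> {..<n}"
  show "adj E i j * (x j)\<^sup>2 \<le> (if c j then 0 else (x j)\<^sup>2)"
    using adj_col[of i j] assms by (auto simp: adj_def)
qed

lemma main_ineq: "lam\<^sup>2 * SX \<le> mX * SY"
proof -
  have "lam\<^sup>2 * SX = (\<Sum>i<n. if c i then (lam * x i)\<^sup>2 else 0)"
    unfolding SX_def sum_distrib_left by (intro sum.cong refl) (simp add: power_mult_distrib)
  also have "\<dots> \<le> (\<Sum>i<n. if c i then dg i * SY else 0)"
  proof (rule sum_mono)
    fix i assume i: "i \<in> {..<n}"
    show "(if c i then (lam * x i)\<^sup>2 else 0) \<le> (if c i then dg i * SY else 0)"
      using term1[of i] NY_le[of i] dg_nonneg[of i] i
      by (auto intro: order_trans mult_left_mono)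
  qed
  also have "\<dots> = mX * SY" unfolding mX_def sum_distrib_right by (intro sum.cong refl) simp
  finally show ?thesis .
qed

lemma SX_nonneg: "SX \<ge> 0" unfolding SX_def by (simp add: sum_nonneg)
lemma SY_nonneg: "SY \<ge> 0" unfolding SY_def by (simp add: sum_nonneg)

lemma SX_pos: assumes "lam \<noteq> 0" "i0 < n" "x i0 \<noteq> 0" shows "SX > 0"
proof -
  have "SX + SY = (\<Sum>i<n. (x i)\<^sup>2)" unfolding SX_def SY_def
    by (simp add: sum.distrib[symmetric] if_distrib cong: if_cong)
  also have "\<dots> > 0" using assms by (intro sum_pos2[of _ i0]) auto
  finally show ?thesis using SX_SY[OF assms(1)] by simp
qed

lemma lam_sq_le: assumes "lam \<noteq> 0" "i0 < n" "x i0 \<noteq> 0" shows "lam\<^sup>2 \<le> mX"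
proof -
  have "lam\<^sup>2 * SX \<le> mX * SX" using main_ineq SX_SY[OF assms(1)] by simp
  thus ?thesis using SX_pos[OF assms] by simp
qed

lemma eq_case:
  assumes "lam \<noteq> 0" "i0 < n" "x i0 \<noteq> 0" "lam\<^sup>2 = mX" "i < n" "c i"
  shows "dg i * SY = (lam * x i)\<^sup>2" "dg i * (SY - NY i) = 0"
proof -
  define f where "f i = (if c i then dg i * SY - (lam * x i)\<^sup>2 else 0)" for i
  define g where "g i = (if c i then dg i * (SY - NY i) else 0)" for i
  have f_nonneg: "f j \<ge> 0" if "j < n" for j
    using term1[of j] NY_le[of j] dg_nonneg[of j] that unfolding f_def
    by (auto intro: order_trans mult_left_mono)
  have "(\<Sum>j<n. f j) = mX * SY - lam\<^sup>2 * SX"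
  proof -
    have "lam\<^sup>2 * SX = (\<Sum>i<n. if c i then (lam * x i)\<^sup>2 else 0)"
      unfolding SX_def sum_distrib_left by (intro sum.cong refl) (simp add: power_mult_distrib)
    moreover have "mX * SY = (\<Sum>i<n. if c i then dg i * SY else 0)"
      unfolding mX_def sum_distrib_right by (intro sum.cong refl) simp
    moreover have "(\<Sum>j<n. f j) = (\<Sum>i<n. (if c i then dg i * SY else 0) - (if c i then (lam * x i)\<^sup>2 else 0))"
      unfolding f_def by (intro sum.cong) auto
    ultimately show ?thesis by (simp add: sum_subtractf)
  qed
  also have "\<dots> = 0" using assms(4) SX_SY[OF assms(1)] by simp
  finally have "(\<Sum>j<n. f j) = 0" .
  hence fi: "f i = 0" using f_nonneg assms(5)
    by (subst (asm) sum_nonneg_eq_0_iff) auto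
  thus "dg i * SY = (lam * x i)\<^sup>2" using assms(6) unfolding f_def by simp
  have "dg i * (SY - NY i) \<ge> 0" using NY_le[OF assms(6)] dg_nonneg[of i] by simp
  moreover have "(lam * x i)\<^sup>2 \<le> dg i * NY i" using term1[OF assms(5)] .
  moreover have "dg i * (SY - NY i) = dg i * SY - dg i * NY i" by (simp add: right_diff_distrib)
  ultimately show "dg i * (SY - NY i) = 0" using \<open>dg i * SY = (lam * x i)\<^sup>2\<close>
    by linarith
qed

lemma eq_adj:
  assumes "lam \<noteq> 0" "i0 < n" "x i0 \<noteq> 0" "lam\<^sup>2 = mX" "i < n" "c i" "x i \<noteq> 0"
    "j < n" "\<not> c j" "x j \<noteq> 0"
  shows "E i j"
proof -
  have e1: "dg i * SY = (lam * x i)\<^sup>2" and e2: "dg i * (SY - NY i) = 0"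
    using eq_case[OF assms(1-6)] by auto
  have "(lam * x i)\<^sup>2 > 0" using assms by simp
  hence "dg i \<noteq> 0" using e1 by auto
  hence "SY - NY i = 0" using e2 by simp
  hence s0: "(\<Sum>l<n. (if c l then 0 else (x l)\<^sup>2) - adj E i l * (x l)\<^sup>2) = 0"
    unfolding SY_def NY_def by (simp add: sum_subtractf)
  have nn: "\<forall>l\<in>{..<n}. (if c l then 0 else (x l)\<^sup>2) - adj E i l * (x l)\<^sup>2 \<ge> 0"
    using adj_col[of i] assms(6) by (auto simp: adj_def)
  have "(if c j then 0 else (x j)\<^sup>2) - adj E i j * (x j)\<^sup>2 = 0"
    using s0 nn assms(8) by (subst (asm) sum_nonneg_eq_0_iff) auto
  hence "(1 - adj E i j) * (x j)\<^sup>2 = 0" using assms(9) by (simp add: algebra_simps)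
  hence "adj E i j = 1" using assms(10) by simp
  thus ?thesis by (simp add: adj_def split: if_splits)
qed

lemma eq_iso:
  assumes "lam \<noteq> 0" "i0 < n" "x i0 \<noteq> 0" "lam\<^sup>2 = mX" "i < n" "c i" "x i = 0"
  shows "dg i = 0"
proof -
  have e1: "dg i * SY = (lam * x i)\<^sup>2" using eq_case[OF assms(1-6)] by auto
  have "SY > 0" using SX_pos[OF assms(1-3)] SX_SY[OF assms(1)] by simp
  thus ?thesis using e1 assms(7) by simp
qed

end

definition has_kP3 :: "nat set \<Rightarrow> (nat \<Rightarrow> nat \<Rightarrow> bool) \<Rightarrow> nat \<Rightarrow> bool" where
  "has_kP3 V E k \<longleftrightarrow> (\<exists>p :: nat \<Rightarrow> nat \<Rightarrow> nat.
        inj_on (\<lambda>(i, j). p i j) ({..<k} \<times> {..<3}) \<and>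
        (\<forall>i<k. \<forall>j<3. p i j \<in> V) \<and>
        (\<forall>i<k. E (p i 0) (p i 1) \<and> E (p i 1) (p i 2)))"

lemma contains_iff: "contains_kP3 k n E \<longleftrightarrow> has_kP3 {..<n} E k"
  unfolding contains_kP3_def has_kP3_def by simp

lemma has_zero: "has_kP3 V E 0"
  unfolding has_kP3_def by (intro exI[of _ "\<lambda>i j. 0"]) simp

lemma has_extend:
  assumes h: "has_kP3 (V - {a,b,c}) E k"
    and V: "a \<in> V" "b \<in> V" "c \<in> V" and d: "a \<noteq> b" "b \<noteq> c" "a \<noteq> c"
    and e: "E a b" "E b c"
  shows "has_kP3 V E (Suc k)"
proof -
  from h obtain p :: "nat \<Rightarrow> nat \<Rightarrow> nat" where inj: "inj_on (\<lambda>(i, j). p i j) ({..<k} \<times> {..<3})"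
    and pV: "\<forall>i<k. \<forall>j<3. p i j \<in> V - {a,b,c}"
    and pE: "\<forall>i<k. E (p i 0) (p i 1) \<and> E (p i 1) (p i 2)"
    unfolding has_kP3_def by blast
  define q where "q i j = (if i = k then (if j = 0 then a else if j = 1 then b else c) else p i j)" for i j
  have qk: "q k j \<in> {a,b,c}" for j unfolding q_def by auto
  have "inj_on (\<lambda>(i, j). q i j) ({..<Suc k} \<times> {..<3})"
  proof (rule inj_onI, clarify)
    fix i j i' j' assume A: "i < Suc k" "j < 3" "i' < Suc k" "j' < 3" and eq: "q i j = q i' j'"
    show "i = i' \<and> j = j'"
    proof (cases "i = k")
      case True
      show ?thesis
      proof (cases "i' = k")
        case True
        with \<open>i = k\<close> eq A d show ?thesis unfolding q_def
          by (auto simp: less_Suc_eq numeral_3_eq_3 split: if_splits)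
      next
        case False
        hence "q i' j' = p i' j'" "i' < k" using A unfolding q_def by auto
        with pV A have "q i' j' \<notin> {a,b,c}" by auto
        with qk[of j] eq \<open>i = k\<close> show ?thesis by auto
      qed
    next
      case False
      hence qi: "q i j = p i j" "i < k" using A unfolding q_def by auto
      with pV A have ni: "q i j \<notin> {a,b,c}" by auto
      show ?thesis
      proof (cases "i' = k")
        case True
        with qk[of j'] eq ni show ?thesis by auto
      next
        case False
        hence "q i' j' = p i' j'" "i' < k" using A unfolding q_def by auto
        with qi eq inj A show ?thesis unfolding inj_on_def by auto
      qed
    qed
  qed
  moreover have "\<forall>i<Suc k. \<forall>j<3. q i j \<in> V"
    using pV V unfolding q_def by (auto simp: less_Suc_eq)
  moreover have "\<forall>i<Suc k. E (q i 0) (q i 1) \<and> E (q i 1) (q i 2)"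
    using pE e unfolding q_def by (auto simp: less_Suc_eq)
  ultimately show ?thesis unfolding has_kP3_def by blast
qed

lemma has_mono: "has_kP3 V E k \<Longrightarrow> V \<subseteq> W \<Longrightarrow> has_kP3 W E k"
  unfolding has_kP3_def by blast

lemma card_ge2_obtain:
  assumes "card A \<ge> 2"
  obtains a b where "a \<in> A" "b \<in> A" "a \<noteq> b"
proof -
  have "finite A" using assms by (metis card.infinite not_numeral_le_zero)
  from assms obtain B where "B \<subseteq> A" "card B = 2"
    by (metis obtain_subset_with_card_n)
  then obtain a b where "B = {a,b}" "a \<noteq> b" by (auto simp: card_2_iff)
  thus ?thesis using that \<open>B \<subseteq> A\<close> by auto
qed

definition deg :: "nat set \<Rightarrow> (nat \<Rightarrow> nat \<Rightarrow> bool) \<Rightarrow> nat \<Rightarrow> nat" where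
  "deg V E u = card {w \<in> V. E u w}"

definition DS :: "nat set \<Rightarrow> (nat \<Rightarrow> nat \<Rightarrow> bool) \<Rightarrow> nat" where
  "DS V E = (\<Sum>u\<in>V. deg V E u)"

lemma card_filter_sum: "finite B \<Longrightarrow> card {w\<in>B. P w} = (\<Sum>w\<in>B. if P w then 1 else 0)"
  by (simp add: sum.If_cases Int_def)

lemma fam_side:
  fixes p :: "nat \<Rightarrow> nat \<Rightarrow> nat"
  assumes col: "\<And>u v. E u v \<Longrightarrow> c u \<noteq> c v"
    and pE: "\<forall>i<k. E (p i 0) (p i 1) \<and> E (p i 1) (p i 2)"
  shows "card {w \<in> (\<lambda>(i, j). p i j) ` ({..<k} \<times> {..<3}). c w = s} \<le> 2 * k"
proof -
  define T where "T i = {w. (w = p i 0 \<or> w = p i 1 \<or> w = p i 2) \<and> c w = s}" for i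
  have sub: "{w \<in> (\<lambda>(i, j). p i j) ` ({..<k} \<times> {..<3}). c w = s} \<subseteq> (\<Union>i<k. T i)"
  proof
    fix w assume "w \<in> {w \<in> (\<lambda>(i, j). p i j) ` ({..<k} \<times> {..<3}). c w = s}"
    then obtain i j where ij: "i < k" "j < 3" "w = p i j" "c w = s" by auto
    hence "w \<in> T i" unfolding T_def using ij(2) by (auto simp: numeral_3_eq_3 numeral_2_eq_2 less_Suc_eq)
    thus "w \<in> (\<Union>i<k. T i)" using ij(1) by auto
  qed
  have cT: "card (T i) \<le> 2" if "i < k" for i
  proof -
    have c1: "c (p i 0) \<noteq> c (p i 1)" "c (p i 1) \<noteq> c (p i 2)" using pE that col by auto
    have "T i \<subseteq> {p i 1} \<or> T i \<subseteq> {p i 0, p i 2}"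
      using c1 unfolding T_def by (cases "c (p i 1) = s") auto
    moreover have "card {p i 0, p i 2} \<le> 2" by (cases "p i 0 = p i 2") auto
    ultimately show ?thesis
    proof (elim disjE)
      assume "T i \<subseteq> {p i 1}"
      hence "card (T i) \<le> card {p i 1}" by (intro card_mono) auto
      thus ?thesis by simp
    next
      assume "T i \<subseteq> {p i 0, p i 2}" "card {p i 0, p i 2} \<le> 2"
      hence "card (T i) \<le> card {p i 0, p i 2}" by (intro card_mono) auto
      thus ?thesis using \<open>card {p i 0, p i 2} \<le> 2\<close> by linarith
    qed
  qed
  have "card {w \<in> (\<lambda>(i, j). p i j) ` ({..<k} \<times> {..<3}). c w = s} \<le> card (\<Union>i<k. T i)"
    by (rule card_mono[OF _ sub]) (auto simp: T_def)
  also have "\<dots> \<le> (\<Sum>i<k. card (T i))" by (rule card_UN_le) simp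
  also have "\<dots> \<le> (\<Sum>i<k. 2)" by (rule sum_mono) (use cT in auto)
  finally show ?thesis by simp
qed

lemma vertex_extend:
  fixes c :: "nat \<Rightarrow> bool"
  assumes h: "has_kP3 (V - {v}) E k" and v: "v \<in> V" and fin: "finite V"
    and dv: "deg V E v \<ge> 2 * k + 2"
    and col: "\<And>u w. E u w \<Longrightarrow> c u \<noteq> c w" and sym: "\<And>u w. E u w \<Longrightarrow> E w u"
    and irr: "\<And>u. \<not> E u u"
  shows "has_kP3 V E (Suc k)"
proof -
  from h obtain p :: "nat \<Rightarrow> nat \<Rightarrow> nat" where inj: "inj_on (\<lambda>(i, j). p i j) ({..<k} \<times> {..<3})"
    and pV: "\<forall>i<k. \<forall>j<3. p i j \<in> V - {v}"
    and pE: "\<forall>i<k. E (p i 0) (p i 1) \<and> E (p i 1) (p i 2)"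
    unfolding has_kP3_def by blast
  define F where "F = (\<lambda>(i, j). p i j) ` ({..<k} \<times> {..<3})"
  define N where "N = {w \<in> V. E v w}"
  have finN: "finite N" using fin unfolding N_def by simp
  have "N \<inter> F \<subseteq> {w \<in> F. c w = (\<not> c v)}" unfolding N_def using col by auto
  hence "card (N \<inter> F) \<le> card {w \<in> F. c w = (\<not> c v)}"
    by (rule card_mono[rotated]) (simp add: F_def)
  also have "\<dots> \<le> 2 * k" unfolding F_def by (rule fam_side[OF col pE])
  finally have "card (N \<inter> F) \<le> 2 * k" .
  moreover have "card N = card (N - F) + card (N \<inter> F)"
    using card_Int_Diff[OF finN, of F] by simp
  moreover have "card N \<ge> 2 * k + 2" using dv unfolding deg_def N_def .
  ultimately have "card (N - F) \<ge> 2" by linarith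
  then obtain w1 w2 where w: "w1 \<in> N - F" "w2 \<in> N - F" "w1 \<noteq> w2" by (rule card_ge2_obtain)
  have "has_kP3 (V - {w1, v, w2}) E k"
    unfolding has_kP3_def
  proof (intro exI[of _ p] conjI)
    show "\<forall>i<k. \<forall>j<3. p i j \<in> V - {w1, v, w2}"
    proof (intro allI impI)
      fix i j :: nat assume "i < k" "j < 3"
      hence "p i j \<in> F" unfolding F_def by force
      thus "p i j \<in> V - {w1, v, w2}" using pV \<open>i < k\<close> \<open>j < 3\<close> w by auto
    qed
  qed (use inj pE in auto)
  moreover have "w1 \<noteq> v" "w2 \<noteq> v" using w irr unfolding N_def by auto
  ultimately show ?thesis
    using has_extend[of V w1 v w2 E k] w v sym unfolding N_def by auto
qed

lemma P3free_deg:
  assumes h: "\<not> has_kP3 V E 1" and u: "u \<in> V" and irr: "\<And>u. \<not> E u u"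
    and sym: "\<And>u w. E u w \<Longrightarrow> E w u"
  shows "deg V E u \<le> 1"
proof (rule ccontr)
  assume "\<not> deg V E u \<le> 1"
  hence "card {w \<in> V. E u w} \<ge> 2" unfolding deg_def by simp
  then obtain a b where ab: "a \<in> {w \<in> V. E u w}" "b \<in> {w \<in> V. E u w}" "a \<noteq> b"
    by (rule card_ge2_obtain)
  have "has_kP3 (V - {a, u, b}) E 0" by (rule has_zero)
  from has_extend[OF this] ab u irr sym have "has_kP3 V E (Suc 0)" by (metis mem_Collect_eq)
  with h show False by simp
qed

lemma DS_le_card: "finite V \<Longrightarrow> (\<And>u. u \<in> V \<Longrightarrow> deg V E u \<le> 1) \<Longrightarrow> DS V E \<le> card V"
  unfolding DS_def using sum_bounded_above[of V "deg V E" 1] by simp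

lemma deg_sum: "finite V \<Longrightarrow> deg V E u = (\<Sum>w\<in>V. if E u w then 1 else 0)"
  unfolding deg_def by (rule card_filter_sum)

lemma DS_remove:
  assumes fin: "finite V" and Q: "Q \<subseteq> V" and sym: "\<And>u w. E u w \<Longrightarrow> E w u"
  shows "DS V E \<le> DS (V - Q) E + 2 * (\<Sum>q\<in>Q. deg V E q)"
proof -
  define ind where "ind u w = (if E u w then 1 else 0 :: nat)" for u w
  have finQ: "finite Q" using fin Q finite_subset by blast
  have VQ: "V = (V - Q) \<union> Q" using Q by auto
  have dV: "deg V E u = (\<Sum>w\<in>V - Q. ind u w) + (\<Sum>w\<in>Q. ind u w)" for u
    unfolding deg_sum[OF fin] ind_def
    by (subst VQ) (rule sum.union_disjoint, use fin finQ in auto)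
  have "DS V E = (\<Sum>u\<in>V - Q. deg V E u) + (\<Sum>u\<in>Q. deg V E u)"
    unfolding DS_def by (subst VQ) (rule sum.union_disjoint, use fin finQ in auto)
  also have "(\<Sum>u\<in>V - Q. deg V E u) = DS (V - Q) E + (\<Sum>u\<in>V - Q. \<Sum>w\<in>Q. ind u w)"
    unfolding DS_def dV by (simp add: sum.distrib deg_sum fin ind_def)
  also have "(\<Sum>u\<in>V - Q. \<Sum>w\<in>Q. ind u w) = (\<Sum>w\<in>Q. \<Sum>u\<in>V - Q. ind w u)"
    by (subst sum.swap) (use sym in \<open>auto intro!: sum.cong simp: ind_def\<close>)
  also have "\<dots> \<le> (\<Sum>w\<in>Q. deg V E w)"
  proof (rule sum_mono)
    fix w assume "w \<in> Q"
    have "(\<Sum>u\<in>V - Q. ind w u) \<le> (\<Sum>u\<in>V. ind w u)"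
      by (rule sum_mono2) (use fin in auto)
    thus "(\<Sum>u\<in>V - Q. ind w u) \<le> deg V E w" by (simp add: deg_sum[OF fin] ind_def)
  qed
  finally show ?thesis by simp
qed

lemma DS_bip:
  assumes fin: "finite V" and col: "\<And>u w. E u w \<Longrightarrow> c u \<noteq> c w"
  shows "DS V E \<le> 2 * card {v \<in> V. c v} * card {v \<in> V. \<not> c v}"
proof -
  let ?X = "{v \<in> V. c v}" and ?Y = "{v \<in> V. \<not> c v}"
  have VXY: "V = ?X \<union> ?Y" by auto
  have "DS V E = (\<Sum>u\<in>?X. deg V E u) + (\<Sum>u\<in>?Y. deg V E u)"
    unfolding DS_def by (subst VXY) (rule sum.union_disjoint, use fin in auto)
  also have "(\<Sum>u\<in>?X. deg V E u) \<le> card ?X * card ?Y"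
  proof -
    have "\<And>u. u \<in> ?X \<Longrightarrow> deg V E u \<le> card ?Y"
      unfolding deg_def by (rule card_mono) (use fin col in auto)
    thus ?thesis using sum_bounded_above[of ?X "deg V E" "card ?Y"] by simp
  qed
  also have "(\<Sum>u\<in>?Y. deg V E u) \<le> card ?Y * card ?X"
  proof -
    have "\<And>u. u \<in> ?Y \<Longrightarrow> deg V E u \<le> card ?X"
      unfolding deg_def by (rule card_mono) (use fin col in auto)
    thus ?thesis using sum_bounded_above[of ?Y "deg V E" "card ?X"] by simp
  qed
  finally show ?thesis by (simp add: algebra_simps)
qed

lemma ar1:
  fixes k n d :: nat
  assumes "k \<ge> 2" "n \<ge> 11 * k + 7" "d \<le> n - k"
  shows "2 * (k - 1) * (n - 1 - k + 1) + 2 * d \<le> 2 * k * (n - k)"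
proof -
  have "k \<le> n" using assms by simp
  then obtain m where n: "n = k + m" using le_Suc_ex by blast
  obtain j where k: "k = Suc j" using assms(1) by (cases k) auto
  have "d \<le> m" using assms(3) n by simp
  hence "2 * j * m + 2 * d \<le> 2 * j * m + 2 * m" by simp
  moreover have "m \<ge> 1" using assms n by simp
  ultimately show ?thesis using n k by (simp add: algebra_simps)
qed

lemma ar2:
  fixes x y k n :: nat
  assumes "x + y = n" "x \<le> k" "k + k \<le> n"
  shows "x * y \<le> k * (n - k)"
proof -
  obtain a where k: "k = x + a" using assms(2) le_Suc_ex by blast
  have "k \<le> y" using assms by simp
  then obtain b where y: "y = k + b" using le_Suc_ex by blast
  hence "n - k = x + b" using assms(1) k by simp
  have "x * y = x * x + x * a + x * b" using y k by (simp add: algebra_simps)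
  also have "\<dots> \<le> x * x + x * a + x * b + a * b" by simp
  also have "\<dots> = k * (n - k)" using \<open>n - k = x + b\<close> k by (simp add: algebra_simps)
  finally show ?thesis .
qed

lemma ar3:
  fixes k n :: nat
  assumes "k \<ge> 2" "n \<ge> 11 * k + 7"
  shows "2 * (k - 1) * (n - 3 - k + 1) + 2 * (3 * (2 * k + 1)) \<le> 2 * k * (n - k)"
proof -
  have "k + 2 \<le> n" using assms by simp
  then obtain m where n: "n = k + 2 + m" using le_Suc_ex by blast
  obtain j where k: "k = Suc j" using assms(1) by (cases k) auto
  have m: "m \<ge> 10 * k + 5" using assms n by simp
  have "n - 3 - k + 1 = m" using n m by simp
  hence "2 * (k - 1) * (n - 3 - k + 1) + 2 * (3 * (2 * k + 1)) = 2 * j * m + 12 * k + 6"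
    using k by (simp add: algebra_simps)
  also have "\<dots> \<le> 2 * j * m + 2 * m + 4 * k" using m by simp
  also have "\<dots> = 2 * k * (n - k)" using n k by (simp add: algebra_simps)
  finally show ?thesis .
qed

lemma ar4:
  fixes k n :: nat
  assumes "k \<ge> 2" "n \<ge> 11 * k + 7"
  shows "n \<le> 2 * k * (n - k)"
proof -
  have "k \<le> n" using assms by simp
  then obtain m where n: "n = k + m" using le_Suc_ex by blast
  have "m \<ge> k" using assms n by simp
  have "n \<le> 2 * m" using n \<open>m \<ge> k\<close> by simp
  also have "\<dots> \<le> 2 * k * m" using assms(1) by simp
  finally show ?thesis using n by simp
qed

lemma baseA:
  fixes c :: "nat \<Rightarrow> bool"
  assumes fin: "finite V" and v: "v \<in> V"
    and low: "\<And>u. u \<in> V - {v} \<Longrightarrow> deg (V - {v}) E u \<le> 1"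
    and col: "\<And>u w. E u w \<Longrightarrow> c u \<noteq> c w" and sym: "\<And>u w. E u w \<Longrightarrow> E w u"
  shows "DS V E \<le> 2 * (card V - 1)"
proof -
  define W where "W = V - {v}"
  have finW: "finite W" using fin unfolding W_def by simp
  have "DS V E \<le> DS W E + 2 * (\<Sum>q\<in>{v}. deg V E q)"
    unfolding W_def by (rule DS_remove) (use fin v sym in auto)
  hence D1: "DS V E \<le> DS W E + 2 * deg V E v" by simp
  define T where "T = {u \<in> W. deg W E u = 1}"
  define N where "N = {w \<in> V. E v w}"
  have lowW: "deg W E u \<le> 1" if "u \<in> W" for u using low that unfolding W_def by simp
  have "DS W E = (\<Sum>u\<in>W. if u \<in> T then 1 else 0)"
    unfolding DS_def by (rule sum.cong) (use lowW in \<open>auto simp: T_def le_Suc_eq\<close>)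
  also have "\<dots> = card T" using finW unfolding T_def by (simp add: sum.If_cases Int_def)
  finally have DW: "DS W E = card T" .
  have NW: "N \<subseteq> W" unfolding N_def W_def using col by auto
  have dv: "deg V E v = card N" unfolding deg_def N_def by simp
  have finT: "finite T" using finW unfolding T_def by simp
  have TW: "T \<subseteq> W" unfolding T_def by auto
  define partner where "partner u = (THE w. w \<in> W \<and> E u w)" for u
  have partner: "partner u \<in> W \<and> E u (partner u) \<and> (\<forall>w\<in>W. E u w \<longrightarrow> w = partner u)"
    if u: "u \<in> T" for u
  proof -
    have "card {w \<in> W. E u w} = 1" using u unfolding T_def deg_def by simp
    then obtain w0 where w0: "{w \<in> W. E u w} = {w0}" by (rule card_1_singletonE)
    hence "\<exists>!w. w \<in> W \<and> E u w" by (metis (mono_tags, lifting) mem_Collect_eq singletonD singletonI)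
    hence "partner u \<in> W \<and> E u (partner u)" unfolding partner_def by (rule theI')
    moreover have "w = w0" if "w \<in> W" "E u w" for w using w0 that by blast
    ultimately show ?thesis by (metis (mono_tags, lifting) mem_Collect_eq singletonI w0)
  qed
  have "card (T \<inter> N) \<le> card (T - N)"
  proof (rule card_inj_on_le[of partner])
    show "inj_on partner (T \<inter> N)"
    proof (rule inj_onI)
      fix u1 u2 assume u: "u1 \<in> T \<inter> N" "u2 \<in> T \<inter> N" and eq: "partner u1 = partner u2"
      define w where "w = partner u1"
      have w: "w \<in> W" "E w u1" "E w u2" using partner[of u1] partner[of u2] u eq sym
        unfolding w_def by auto
      have "u1 \<in> {x \<in> W. E w x}" "u2 \<in> {x \<in> W. E w x}" using w u TW by auto
      moreover have "card {x \<in> W. E w x} \<le> 1" using lowW[OF w(1)] unfolding deg_def .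
      moreover have "finite {x \<in> W. E w x}" using finW by simp
      ultimately show "u1 = u2" using card_le_Suc0_iff_eq[of "{x \<in> W. E w x}"] by auto
    qed
    show "partner ` (T \<inter> N) \<subseteq> T - N"
    proof
      fix y assume "y \<in> partner ` (T \<inter> N)"
      then obtain u where u: "u \<in> T \<inter> N" "y = partner u" by auto
      have y: "y \<in> W" "E u y" using partner[of u] u by auto
      have "u \<in> {x \<in> W. E y x}" using u y sym TW by auto
      hence "card {x \<in> W. E y x} \<noteq> 0" using finW by auto
      hence "deg W E y = 1" using lowW[OF y(1)] unfolding deg_def by linarith
      hence "y \<in> T" using y unfolding T_def by simp
      moreover have "y \<notin> N"
      proof
        assume "y \<in> N"
        hence "E v y" unfolding N_def by simp
        moreover have "E v u" using u unfolding N_def by simp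
        ultimately show False using col y(2) by (metis (full_types))
      qed
      ultimately show "y \<in> T - N" by simp
    qed
    show "finite (T - N)" using finT by simp
  qed
  moreover have "card T = card (T \<inter> N) + card (T - N)" by (rule card_Int_Diff[OF finT])
  moreover have "card (T - N) \<le> card (W - N)" by (rule card_mono) (use finW TW in auto)
  moreover have "card (W - N) = card W - card N" by (rule card_Diff_subset) (use finW NW finite_subset in auto)
  moreover have "card N \<le> card W" by (rule card_mono[OF finW NW])
  moreover have "card W = card V - 1" unfolding W_def using v fin by simp
  ultimately show ?thesis using D1 DW dv by linarith
qed

lemma has1_obtain:
  assumes "has_kP3 V E 1"
  obtains a b c where "a \<in> V" "b \<in> V" "c \<in> V" "a \<noteq> b" "b \<noteq> c" "a \<noteq> c" "E a b" "E b c"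
proof -
  from assms obtain p :: "nat \<Rightarrow> nat \<Rightarrow> nat" where inj: "inj_on (\<lambda>(i, j). p i j) ({..<1} \<times> {..<3})"
    and pV: "\<forall>i<1. \<forall>j<3. p i j \<in> V"
    and pE: "\<forall>i<1. E (p i 0) (p i 1) \<and> E (p i 1) (p i 2)"
    unfolding has_kP3_def by blast
  have d: "p 0 0 \<noteq> p 0 1" "p 0 1 \<noteq> p 0 2" "p 0 0 \<noteq> p 0 2"
    using inj unfolding inj_on_def by fastforce+
  show ?thesis by (rule that[of "p 0 0" "p 0 1" "p 0 2"]) (use pV pE d in auto)
qed

lemma sum3_le:
  assumes "\<And>q. q \<in> {a,b,c} \<Longrightarrow> f q \<le> (B::nat)"
  shows "(\<Sum>q\<in>{a,b,c}. f q) \<le> 3 * B"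
proof -
  have "(\<Sum>q\<in>{a,b,c}. f q) \<le> card {a,b,c} * B" using sum_bounded_above[of "{a,b,c}" f B] assms by simp
  also have "card {a,b,c} \<le> 3" by (simp add: card_insert_le_m1)
  hence "card {a,b,c} * B \<le> 3 * B" by simp
  finally show ?thesis .
qed

lemma edge_bound:
  fixes c :: "nat \<Rightarrow> bool"
  assumes col: "\<And>u w. E u w \<Longrightarrow> c u \<noteq> c w" and symE: "\<And>u w. E u w \<Longrightarrow> E w u"
    and k: "k \<ge> 2"
  shows "finite V \<Longrightarrow> card V \<ge> 11 * k - 4 \<Longrightarrow> \<not> has_kP3 V E k \<Longrightarrow>
         DS V E \<le> 2 * (k - 1) * (card V - k + 1)"
  using k
proof (induction k arbitrary: V rule: nat_induct_at_least)
  have irr: "\<And>u. \<not> E u u" using col by blast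
  {
    case base
    let ?n = "card V"
    show ?case
    proof (cases "\<exists>v\<in>V. deg V E v \<ge> 4")
      case True
      then obtain v where v: "v \<in> V" "deg V E v \<ge> 2 * 1 + 2" by auto
      have "\<not> has_kP3 (V - {v}) E 1"
        using vertex_extend[of V v E 1 c] v base col symE irr by (auto simp: numeral_2_eq_2)
      hence lowv: "\<And>u. u \<in> V - {v} \<Longrightarrow> deg (V - {v}) E u \<le> 1"
        using P3free_deg irr symE by blast
      have "DS V E \<le> 2 * (card V - 1)" by (rule baseA[where c=c]) (use base(1) v(1) lowv col symE in auto)
      thus ?thesis using base(2) by simp
    next
      case False
      hence low: "\<And>v. v \<in> V \<Longrightarrow> deg V E v \<le> 3" by force
      show ?thesis
      proof (cases "has_kP3 V E 1")
        case True
        then obtain a b d where abd: "a \<in> V" "b \<in> V" "d \<in> V" "a \<noteq> b" "b \<noteq> d" "a \<noteq> d" "E a b" "E b d"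
          by (rule has1_obtain)
        have "\<not> has_kP3 (V - {a,b,d}) E 1"
          using has_extend[of V a b d E 1] abd base by (auto simp: numeral_2_eq_2)
        hence "DS (V - {a,b,d}) E \<le> card (V - {a,b,d})"
          using DS_le_card[of "V - {a,b,d}" E] P3free_deg irr symE base(1) by blast
        moreover have "card (V - {a,b,d}) = ?n - 3" using abd base(1) by (simp add: card_Diff_subset)
        moreover have "DS V E \<le> DS (V - {a,b,d}) E + 2 * (\<Sum>q\<in>{a,b,d}. deg V E q)"
          by (rule DS_remove) (use base(1) abd symE in auto)
        moreover have "(\<Sum>q\<in>{a,b,d}. deg V E q) \<le> 3 * 3" by (rule sum3_le) (use low abd in auto)
        ultimately show ?thesis using base(2) by simp
      next
        case False
        hence "DS V E \<le> ?n" using DS_le_card[of V E] P3free_deg irr symE base(1) by blast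
        thus ?thesis using base(2) by simp
      qed
    qed
  next
    case (Suc k)
    let ?n = "card V"
    have n: "?n \<ge> 11 * k + 7" using Suc.prems(2) by simp
    have "?n - Suc k + 1 = ?n - k" using n by linarith
    hence goal_eq: "2 * (Suc k - 1) * (?n - Suc k + 1) = 2 * k * (?n - k)" by (simp only: diff_Suc_1)
    have "DS V E \<le> 2 * k * (?n - k)"
    proof (cases "\<exists>v\<in>V. deg V E v \<ge> 2 * k + 2")
      case True
      then obtain v where v: "v \<in> V" "deg V E v \<ge> 2 * k + 2" by auto
      have nh: "\<not> has_kP3 (V - {v}) E k"
        using vertex_extend[of V v E k c] v Suc.prems col symE irr by auto
      have cv: "card (V - {v}) = ?n - 1" using v Suc.prems(1) by simp
      have IH: "DS (V - {v}) E \<le> 2 * (k - 1) * (?n - 1 - k + 1)"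
        using Suc.IH[of "V - {v}"] nh cv Suc.prems(1) n by simp
      have "DS V E \<le> DS (V - {v}) E + 2 * (\<Sum>q\<in>{v}. deg V E q)"
        by (rule DS_remove) (use Suc.prems(1) v symE in auto)
      hence D1: "DS V E \<le> DS (V - {v}) E + 2 * deg V E v" by simp
      show ?thesis
      proof (cases "deg V E v \<le> ?n - k")
        case True
        from ar1[OF Suc.hyps(1) n True] IH D1 show ?thesis by simp
      next
        case False
        define c' where "c' w = (c w = c v)" for w
        have col': "\<And>u w. E u w \<Longrightarrow> c' u \<noteq> c' w" unfolding c'_def using col by blast
        have DB: "DS V E \<le> 2 * card {w \<in> V. c' w} * card {w \<in> V. \<not> c' w}"
          by (rule DS_bip[OF Suc.prems(1) col'])
        have "{w \<in> V. E v w} \<subseteq> {w \<in> V. \<not> c' w}" unfolding c'_def using col by auto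
        hence "deg V E v \<le> card {w \<in> V. \<not> c' w}" unfolding deg_def
          by (rule card_mono[rotated]) (use Suc.prems(1) in simp)
        moreover have "card {w \<in> V. c' w} + card {w \<in> V. \<not> c' w} = ?n"
          using card_Int_Diff[OF Suc.prems(1), of "{w. c' w}"] by (simp add: Int_def set_diff_eq add.commute)
        ultimately have x: "card {w \<in> V. c' w} \<le> k" using False by linarith
        have "card {w \<in> V. c' w} * card {w \<in> V. \<not> c' w} \<le> k * (?n - k)"
          by (rule ar2[OF \<open>card {w \<in> V. c' w} + card {w \<in> V. \<not> c' w} = ?n\<close> x]) (use n in simp)
        with DB show ?thesis by simp
      qed
    next
      case False
      hence low: "\<And>v. v \<in> V \<Longrightarrow> deg V E v \<le> 2 * k + 1" by force
      show ?thesis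
      proof (cases "has_kP3 V E 1")
        case True
        then obtain a b d where abd: "a \<in> V" "b \<in> V" "d \<in> V" "a \<noteq> b" "b \<noteq> d" "a \<noteq> d" "E a b" "E b d"
          by (rule has1_obtain)
        have nh: "\<not> has_kP3 (V - {a,b,d}) E k"
          using has_extend[of V a b d E k] abd Suc.prems by auto
        have cQ: "card (V - {a,b,d}) = ?n - 3" using abd Suc.prems(1) by (simp add: card_Diff_subset)
        have IH: "DS (V - {a,b,d}) E \<le> 2 * (k - 1) * (?n - 3 - k + 1)"
          using Suc.IH[of "V - {a,b,d}"] nh cQ Suc.prems(1) n by simp
        have "DS V E \<le> DS (V - {a,b,d}) E + 2 * (\<Sum>q\<in>{a,b,d}. deg V E q)"
          by (rule DS_remove) (use Suc.prems(1) abd symE in auto)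
        moreover have "(\<Sum>q\<in>{a,b,d}. deg V E q) \<le> 3 * (2 * k + 1)" by (rule sum3_le) (use low abd in auto)
        ultimately have "DS V E \<le> 2 * (k - 1) * (?n - 3 - k + 1) + 2 * (3 * (2 * k + 1))"
          using IH by linarith
        also have "\<dots> \<le> 2 * k * (?n - k)" by (rule ar3[OF Suc.hyps(1) n])
        finally show ?thesis by simp
      next
        case False
        hence "DS V E \<le> ?n" using DS_le_card[of V E] P3free_deg irr symE Suc.prems(1) by blast
        also have "\<dots> \<le> 2 * k * (?n - k)" by (rule ar4[OF Suc.hyps(1) n])
        finally show ?thesis by simp
      qed
    qed
    thus ?case using goal_eq by simp
  }
qed

lemma cb_has_aux:
  "finite A \<Longrightarrow> finite B \<Longrightarrow> A \<inter> B = {} \<Longrightarrow> A \<union> B \<subseteq> V \<Longrightarrow>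
   (\<forall>a\<in>A. \<forall>b\<in>B. E a b \<and> E b a) \<Longrightarrow> card A \<ge> j \<Longrightarrow> card B \<ge> j \<Longrightarrow>
   card A + card B \<ge> 3 * j \<Longrightarrow> has_kP3 V E j"
proof (induction j arbitrary: A B V)
  case 0
  show ?case by (rule has_zero)
next
  case (Suc j)
  have main: "has_kP3 V E (Suc j)"
    if fA: "finite A" and fB: "finite B" and dis: "A \<inter> B = {}" and sub: "A \<union> B \<subseteq> V"
      and e: "\<forall>a\<in>A. \<forall>b\<in>B. E a b \<and> E b a" and cA: "card A \<ge> Suc j" and cB: "card B \<ge> Suc j"
      and cs: "card A + card B \<ge> 3 * Suc j" and ge: "card B \<le> card A" for A B V
  proof -
    have s3: "3 * Suc j = 3 * j + 3" by simp
    have "card A \<ge> 2" using cs ge s3 by linarith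
    then obtain a1 a2 where a: "a1 \<in> A" "a2 \<in> A" "a1 \<noteq> a2" by (rule card_ge2_obtain)
    have "card B \<noteq> 0" using cB by simp
    then obtain b where b: "b \<in> B" using fB by (metis all_not_in_conv card.empty)
    have ab: "a1 \<notin> B" "a2 \<notin> B" "b \<notin> A" using a b dis by auto
    have cA': "card (A - {a1, a2}) = card A - 2" using a fA by (simp add: card_Diff_subset)
    have cB': "card (B - {b}) = card B - 1" using b fB by simp
    have "has_kP3 (V - {a1, b, a2}) E j"
    proof (rule Suc.IH)
      show "finite (A - {a1, a2})" "finite (B - {b})" using fA fB by auto
      show "(A - {a1, a2}) \<inter> (B - {b}) = {}" using dis by auto
      show "A - {a1, a2} \<union> (B - {b}) \<subseteq> V - {a1, b, a2}" using sub ab by auto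
      show "\<forall>a\<in>A - {a1, a2}. \<forall>b\<in>B - {b}. E a b \<and> E b a" using e by auto
      show "j \<le> card (A - {a1, a2})" "j \<le> card (B - {b})"
        "3 * j \<le> card (A - {a1, a2}) + card (B - {b})"
        using cA' cB' cA cB cs ge s3 by linarith+
    qed
    thus ?thesis using has_extend[of V a1 b a2 E j] a b ab sub e by auto
  qed
  show ?case
  proof (cases "card B \<le> card A")
    case True
    thus ?thesis using main Suc.prems by blast
  next
    case False
    thus ?thesis using main[of B A V] Suc.prems by (auto simp: Int_commute Un_commute)
  qed
qed

lemma ar5:
  fixes a b k n :: nat
  assumes "a + b < 3 * k" "k \<ge> 2" "n \<ge> 11 * k - 4"
  shows "a * b < (k - 1) * (n - k + 1)"
proof -
  have "4 * (a * b) \<le> (a + b) * (a + b)"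
  proof -
    have "(int a - int b)^2 \<ge> 0" by simp
    hence "4 * (int a * int b) \<le> (int a + int b) * (int a + int b)"
      by (simp add: power2_eq_square algebra_simps)
    thus ?thesis by (metis of_nat_add of_nat_le_iff of_nat_mult of_nat_numeral)
  qed
  also have "\<dots> \<le> (3 * k - 1) * (3 * k - 1)" using assms(1) by (intro mult_mono) auto
  finally have A: "4 * (a * b) \<le> (3 * k - 1) * (3 * k - 1)" .
  obtain j where k: "k = j + 2" using assms(2) by (metis add.commute le_Suc_ex)
  define m where "m = n - k + 1"
  have m: "m \<ge> 10 * j + 17" using assms k unfolding m_def by simp
  have "(3 * k - 1) * (3 * k - 1) = 9 * (j * j) + 30 * j + 25" using k by (simp add: algebra_simps)
  moreover have "j * m \<ge> j * (10 * j + 17)" using m by simp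
  hence "j * m \<ge> 10 * (j * j) + 17 * j" by (simp add: algebra_simps)
  moreover have "(k - 1) * (n - k + 1) = (j + 1) * m" using k unfolding m_def by simp
  hence "4 * ((k - 1) * (n - k + 1)) = 4 * (j * m) + 4 * m" by (simp add: algebra_simps)
  ultimately have "(3 * k - 1) * (3 * k - 1) < 4 * ((k - 1) * (n - k + 1))" using m by linarith
  with A show ?thesis by linarith
qed

lemma ar6:
  fixes s t K M :: nat
  assumes "s \<le> K" "s + t \<le> K + M" "s * t = K * M" "K \<le> M" "K > 0"
  shows "s = K \<and> t = M"
proof (cases "s = K")
  case True
  thus ?thesis using assms(3,5) by simp
next
  case False
  define p where "p = K - s"
  have p: "K = s + p" "p \<ge> 1" using assms(1) False unfolding p_def by auto
  define q where "q = M - s"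
  have q: "M = s + q" "q \<ge> p" using assms(4) p unfolding q_def by auto
  have "t \<le> s + p + q" using assms(2) p q by simp
  hence "s * t \<le> s * (s + p + q)" by simp
  also have "\<dots> < s * (s + p + q) + p * q" using p q by simp
  also have "\<dots> = K * M" using p q by (simp add: algebra_simps)
  finally show ?thesis using assms(3) by simp
qed

context eigsetup
begin

lemma dg_card: "dg i = real (deg {..<n} E i)"
proof -
  have "card {w \<in> {..<n}. E i w} = (\<Sum>w<n. if E i w then 1 else 0)" by (rule card_filter_sum) simp
  hence "real (card {w \<in> {..<n}. E i w}) = (\<Sum>w<n. real (if E i w then 1 else 0))"
    by (simp only: of_nat_sum)
  also have "\<dots> = (\<Sum>w<n. adj E i w)" by (rule sum.cong) (simp_all add: adj_def)
  finally show ?thesis unfolding dg_def deg_def by simp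
qed

lemma mX_sum: "mX + (\<Sum>i<n. if c i then 0 else dg i) = real (DS {..<n} E)"
proof -
  have "mX + (\<Sum>i<n. if c i then 0 else dg i) = (\<Sum>i<n. dg i)"
    unfolding mX_def by (simp add: sum.distrib[symmetric] if_distrib cong: if_cong)
  also have "\<dots> = real (DS {..<n} E)" by (simp add: DS_def of_nat_sum dg_card)
  finally show ?thesis .
qed

end

lemma eig_bound:
  fixes c :: "nat \<Rightarrow> bool"
  assumes sym: "\<And>u v. E u v \<Longrightarrow> E v u" and col: "\<And>u v. E u v \<Longrightarrow> c u \<noteq> c v"
    and ev: "adj_eigenvalue n E lam" and DSb: "DS {..<n} E \<le> 2 * B"
  shows "lam \<le> sqrt (real B)"
proof (cases "lam \<le> 0")
  case True
  thus ?thesis by (meson order_trans real_sqrt_ge_zero of_nat_0_le_iff)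
next
  case False
  from ev obtain x where x0: "\<exists>i<n. x i \<noteq> 0"
    and evx: "\<forall>i<n. (\<Sum>j<n. adj E i j * x j) = lam * x i"
    unfolding adj_eigenvalue_def by blast
  then obtain i0 where i0: "i0 < n" "x i0 \<noteq> 0" by blast
  interpret X: eigsetup n E c x lam using sym col evx by unfold_locales auto
  interpret Y: eigsetup n E "\<lambda>i. \<not> c i" x lam using sym col evx by unfold_locales auto
  have l1: "lam\<^sup>2 \<le> X.mX" using X.lam_sq_le[OF _ i0] False by simp
  have l2: "lam\<^sup>2 \<le> Y.mX" using Y.lam_sq_le[OF _ i0] False by simp
  have "Y.mX = (\<Sum>i<n. if c i then 0 else X.dg i)"
    unfolding Y.mX_def Y.dg_def X.dg_def by (rule sum.cong) auto
  hence "X.mX + Y.mX = real (DS {..<n} E)" using X.mX_sum by simp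
  moreover have "real (DS {..<n} E) \<le> real (2 * B)" using DSb by (simp only: of_nat_le_iff)
  ultimately have "lam\<^sup>2 \<le> real B" using l1 l2 by simp
  thus ?thesis by (rule real_le_rsqrt)
qed

lemma eig_struct:
  fixes c :: "nat \<Rightarrow> bool"
  assumes sym: "\<And>u v. E u v \<Longrightarrow> E v u" and col: "\<And>u v. E u v \<Longrightarrow> c u \<noteq> c v"
    and bnd: "\<And>u v. E u v \<Longrightarrow> u < n \<and> v < n"
    and ev: "adj_eigenvalue n E lam" and DSb: "DS {..<n} E \<le> 2 * B"
    and lpos: "lam > 0" and lsq: "lam\<^sup>2 = real B"
  shows "\<exists>P. P \<subseteq> {..<n} \<and> (\<forall>u v. E u v \<longleftrightarrow> u \<in> P \<and> v \<in> P \<and> c u \<noteq> c v) \<and>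
             card {i \<in> P. c i} * card {i \<in> P. \<not> c i} = B"
proof -
  from ev obtain x where x0: "\<exists>i<n. x i \<noteq> 0"
    and evx: "\<forall>i<n. (\<Sum>j<n. adj E i j * x j) = lam * x i"
    unfolding adj_eigenvalue_def by blast
  then obtain i0 where i0: "i0 < n" "x i0 \<noteq> 0" by blast
  interpret X: eigsetup n E c x lam using sym col evx by unfold_locales auto
  interpret Y: eigsetup n E "\<lambda>i. \<not> c i" x lam using sym col evx by unfold_locales auto
  have ln: "lam \<noteq> 0" using lpos by simp
  have l1: "lam\<^sup>2 \<le> X.mX" using X.lam_sq_le[OF ln i0] by simp
  have l2: "lam\<^sup>2 \<le> Y.mX" using Y.lam_sq_le[OF ln i0] by simp
  have "Y.mX = (\<Sum>i<n. if c i then 0 else X.dg i)"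
    unfolding Y.mX_def Y.dg_def X.dg_def by (rule sum.cong) auto
  hence "X.mX + Y.mX = real (DS {..<n} E)" using X.mX_sum by simp
  moreover have "real (DS {..<n} E) \<le> real (2 * B)" using DSb by (simp only: of_nat_le_iff)
  ultimately have eX: "lam\<^sup>2 = X.mX" and eY: "lam\<^sup>2 = Y.mX" using l1 l2 lsq by simp_all
  define P where "P = {i. i < n \<and> x i \<noteq> 0}"
  have dg0: "\<not> E i j" if "i < n" "x i = 0" for i j
  proof
    assume Eij: "E i j"
    have "X.dg i = 0"
    proof (cases "c i")
      case True thus ?thesis using X.eq_iso[OF ln i0 eX that(1) True that(2)] by simp
    next
      case False thus ?thesis using Y.eq_iso[OF ln i0 eY that(1) _ that(2)] unfolding X.dg_def Y.dg_def by simp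
    qed
    hence "(\<Sum>l<n. adj E i l) = 0" unfolding X.dg_def .
    hence "adj E i j = 0" using bnd[OF Eij] by (subst (asm) sum_nonneg_eq_0_iff) (auto simp: adj_nonneg)
    with Eij show False by (simp add: adj_def)
  qed
  have EP: "E u v \<longleftrightarrow> u \<in> P \<and> v \<in> P \<and> c u \<noteq> c v" for u v
  proof
    assume Euv: "E u v"
    have "u < n" "v < n" using bnd[OF Euv] by auto
    moreover have "x u \<noteq> 0" using dg0[of u v] Euv \<open>u < n\<close> by auto
    moreover have "x v \<noteq> 0" using dg0[of v u] sym[OF Euv] \<open>v < n\<close> by auto
    ultimately show "u \<in> P \<and> v \<in> P \<and> c u \<noteq> c v" using col[OF Euv] unfolding P_def by auto
  next
    assume h: "u \<in> P \<and> v \<in> P \<and> c u \<noteq> c v"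
    show "E u v"
    proof (cases "c u")
      case True
      thus ?thesis using X.eq_adj[OF ln i0 eX, of u v] h unfolding P_def by auto
    next
      case False
      thus ?thesis using Y.eq_adj[OF ln i0 eY, of u v] h unfolding P_def by auto
    qed
  qed
  define PX where "PX = {i \<in> P. c i}"
  define PY where "PY = {i \<in> P. \<not> c i}"
  have PXs: "PX \<subseteq> {..<n}" unfolding PX_def P_def by auto
  have "X.mX = (\<Sum>i<n. if i \<in> PX then real (card PY) else 0)"
    unfolding X.mX_def
  proof (rule sum.cong)
    fix i assume i: "i \<in> {..<n}"
    show "(if c i then X.dg i else 0) = (if i \<in> PX then real (card PY) else 0)"
    proof (cases "c i")
      case True
      have "{j \<in> {..<n}. E i j} = (if i \<in> P then PY else {})"
        using EP True bnd unfolding PY_def P_def by auto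
      thus ?thesis using True i unfolding X.dg_card deg_def PX_def by auto
    qed (simp add: PX_def)
  qed simp
  also have "\<dots> = real (card PX) * real (card PY)"
    using PXs by (simp add: sum.If_cases Int_absorb1)
  finally have "real B = real (card PX * card PY)" using eX lsq by simp
  hence "card PX * card PY = B" by (simp only: of_nat_eq_iff)
  thus ?thesis using EP unfolding PX_def PY_def P_def by (intro exI[of _ P]) (auto simp: P_def)
qed

lemma sum_if_const:
  fixes C :: real and n :: nat and S :: "nat set"
  assumes "S \<subseteq> {..<n}"
  shows "(\<Sum>j<n. if j \<in> S then 0 else C) = real (card ({..<n} - S)) * C"
    and "(\<Sum>j<n. if j \<in> S then C else 0) = real (card S) * C"
proof -
  have "(\<Sum>j<n. if j \<in> S then 0 else C) = (\<Sum>j\<in>{..<n} - S. C)"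
    by (rule sum.mono_neutral_cong_right) auto
  thus "(\<Sum>j<n. if j \<in> S then 0 else C) = real (card ({..<n} - S)) * C"
    by simp
  have "(\<Sum>j<n. if j \<in> S then C else 0) = (\<Sum>j\<in>S. C)"
    by (rule sum.mono_neutral_cong_right) (use assms in auto)
  thus "(\<Sum>j<n. if j \<in> S then C else 0) = real (card S) * C"
    by simp
qed

lemma cb_eig:
  assumes cb: "is_complete_bipartite a b n E" and a: "a \<ge> 1" and b: "b \<ge> 1"
  shows "adj_eigenvalue n E (sqrt (real a * real b))"
proof -
  from cb obtain S where S: "S \<subseteq> {..<n}" "card S = a" "card ({..<n} - S) = b"
    and ES: "\<And>u v. E u v \<longleftrightarrow> (u < n \<and> v < n \<and> (u \<in> S \<longleftrightarrow> v \<notin> S))"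
    unfolding is_complete_bipartite_def by blast
  define x where "x i = (if i \<in> S then sqrt (real b) else sqrt (real a))" for i
  have "S \<noteq> {}" using S(2) a by auto
  then obtain i0 where i0: "i0 \<in> S" by auto
  have "i0 < n" "x i0 \<noteq> 0" using i0 S(1) b unfolding x_def by auto
  moreover have "(\<Sum>j<n. adj E i j * x j) = sqrt (real a * real b) * x i" if i: "i < n" for i
  proof (cases "i \<in> S")
    case True
    have "(\<Sum>j<n. adj E i j * x j) = (\<Sum>j<n. if j \<in> S then 0 else sqrt (real a))"
      by (rule sum.cong) (use True i ES in \<open>auto simp: adj_def x_def\<close>)
    also have "\<dots> = real b * sqrt (real a)" using sum_if_const(1)[OF S(1)] S(3) by simp
    also have "\<dots> = sqrt (real a * real b) * x i"
      using True unfolding x_def by (simp add: real_sqrt_mult)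
    finally show ?thesis .
  next
    case False
    have "(\<Sum>j<n. adj E i j * x j) = (\<Sum>j<n. if j \<in> S then sqrt (real b) else 0)"
      by (rule sum.cong) (use False i ES in \<open>auto simp: adj_def x_def\<close>)
    also have "\<dots> = real a * sqrt (real b)" using sum_if_const(2)[OF S(1)] S(2) by simp
    also have "\<dots> = sqrt (real a * real b) * x i"
      using False unfolding x_def by (simp add: real_sqrt_mult)
    finally show ?thesis .
  qed
  ultimately show ?thesis unfolding adj_eigenvalue_def by blast
qed

theorem mainTheorem3:
  fixes k n :: nat and E :: "nat \<Rightarrow> nat \<Rightarrow> bool"
  assumes "k \<ge> 2"
    and "n \<ge> 11 * k - 4"
    and "simple_graph n E"
    and "bipartite_graph E"
    and "\<not> contains_kP3 k n E"
  shows "spec_radius n E \<le> sqrt ((real k - 1) * (real n - real k + 1)) \<and>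
         (spec_radius n E = sqrt ((real k - 1) * (real n - real k + 1)) \<longleftrightarrow>
            is_complete_bipartite (k - 1) (n - k + 1) n E)"
proof -
  have sym: "\<And>u v. E u v \<Longrightarrow> E v u" and bnd: "\<And>u v. E u v \<Longrightarrow> u < n \<and> v < n"
    using assms(3) unfolding simple_graph_def by auto
  from assms(4) obtain c :: "nat \<Rightarrow> bool" where col: "\<And>u v. E u v \<Longrightarrow> c u \<noteq> c v"
    unfolding bipartite_graph_def by blast
  have kn: "2 * k \<le> n" using assms(1,2) by linarith
  have n0: "n > 0" using kn assms(1) by linarith
  define B where "B = (k - 1) * (n - k + 1)"
  have "real (k - 1) = real k - 1" using assms(1) by (simp add: of_nat_diff)
  moreover have "real (n - k + 1) = real n - real k + 1" using kn by (simp add: of_nat_diff)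
  ultimately have Breal: "(real k - 1) * (real n - real k + 1) = real B"
    unfolding B_def by (metis of_nat_mult)
  have nok: "\<not> has_kP3 {..<n} E k" using assms(5) contains_iff by auto
  have "DS {..<n} E \<le> 2 * (k - 1) * (card {..<n} - k + 1)"
    by (rule edge_bound[where E=E and c=c and k=k and V="{..<n}", OF col sym assms(1)])
      (use nok assms(2) in auto)
  hence DSb: "DS {..<n} E \<le> 2 * B" unfolding B_def by simp
  define Ss where "Ss = {lam. adj_eigenvalue n E lam}"
  have finS: "finite Ss" unfolding Ss_def by (rule finite_eig)
  have neS: "Ss \<noteq> {}" using exists_eig[OF n0, of E] sym unfolding Ss_def by auto
  have rhoS: "spec_radius n E \<in> Ss" unfolding spec_radius_def Ss_def[symmetric]
    using finS neS by (rule Max_in)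
  have rho_ge: "l \<le> spec_radius n E" if "l \<in> Ss" for l
    unfolding spec_radius_def Ss_def[symmetric] using finS that by (rule Max_ge)
  have up: "spec_radius n E \<le> sqrt (real B)"
    using eig_bound[where E=E and c=c and n=n and B=B, OF sym col _ DSb] rhoS unfolding Ss_def by auto
  have Bpos: "B > 0" unfolding B_def using assms(1) kn by simp
  have "spec_radius n E = sqrt (real B) \<longleftrightarrow> is_complete_bipartite (k - 1) (n - k + 1) n E"
  proof
    assume eq: "spec_radius n E = sqrt (real B)"
    have lpos: "spec_radius n E > 0" using eq Bpos by simp
    have lsq: "(spec_radius n E)\<^sup>2 = real B" using eq by simp
    have evr: "adj_eigenvalue n E (spec_radius n E)" using rhoS unfolding Ss_def by simp
    from eig_struct[where E=E and c=c and n=n and B=B and lam="spec_radius n E", OF sym col bnd evr DSb lpos lsq]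
    obtain P where P: "P \<subseteq> {..<n}" and EP: "\<And>u v. E u v \<longleftrightarrow> u \<in> P \<and> v \<in> P \<and> c u \<noteq> c v"
      and ab: "card {i \<in> P. c i} * card {i \<in> P. \<not> c i} = B"
      by blast
    define PX where "PX = {i \<in> P. c i}"
    define PY where "PY = {i \<in> P. \<not> c i}"
    have finP: "finite P" using P finite_subset by blast
    have finXY: "finite PX" "finite PY" using finP unfolding PX_def PY_def by auto
    have PXY: "PX \<union> PY = P" "PX \<inter> PY = {}" unfolding PX_def PY_def by auto
    have cardP: "card P = card PX + card PY" using card_Un_disjoint[OF finXY PXY(2)] PXY(1) by simp
    have "card P \<le> n" using card_mono[OF _ P] by simp
    hence abn: "card PX + card PY \<le> n" using cardP by simp
    have ab': "card PX * card PY = B" using ab unfolding PX_def PY_def .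
    have notbig: "\<not> (card PX \<ge> k \<and> card PY \<ge> k)"
    proof
      assume big: "card PX \<ge> k \<and> card PY \<ge> k"
      show False
      proof (cases "card PX + card PY \<ge> 3 * k")
        case True
        have "has_kP3 {..<n} E k"
          by (rule cb_has_aux[OF finXY PXY(2)]) (use P PXY(1) EP big True in \<open>auto simp: PX_def PY_def\<close>)
        with nok show False by simp
      next
        case False
        hence "card PX * card PY < (k - 1) * (n - k + 1)" using ar5 assms(1,2) by simp
        with ab' show False unfolding B_def by simp
      qed
    qed
    have KM: "k - 1 \<le> n - k + 1" "k - 1 > 0" "(k - 1) + (n - k + 1) = n" using kn assms(1) by auto
    have fin_full: "P = {..<n}" if "card P = n"
      using card_subset_eq[OF _ P] that by simp
    show "is_complete_bipartite (k - 1) (n - k + 1) n E"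
    proof (cases "card PX \<le> k - 1")
      case True
      from ar6[OF True _ _ KM(1,2)] abn ab' KM(3)
      have st: "card PX = k - 1" "card PY = n - k + 1" unfolding B_def by auto
      hence Pn: "P = {..<n}" using fin_full cardP KM(3) by simp
      show ?thesis unfolding is_complete_bipartite_def
      proof (intro exI[of _ PX] conjI allI)
        show "PX \<subseteq> {..<n}" using Pn unfolding PX_def by auto
        show "card PX = k - 1" by (rule st(1))
        have "{..<n} - PX = PY" using Pn unfolding PX_def PY_def by auto
        thus "card ({..<n} - PX) = n - k + 1" using st(2) by simp
        fix u v show "E u v \<longleftrightarrow> (u < n \<and> v < n \<and> (u \<in> PX \<longleftrightarrow> v \<notin> PX))"
          using EP[of u v] Pn unfolding PX_def by auto
      qed
    next
      case False
      hence Y: "card PY \<le> k - 1" using notbig by linarith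
      have ab'': "card PY * card PX = (k - 1) * (n - k + 1)" using ab' unfolding B_def by (simp add: mult.commute)
      from ar6[OF Y _ ab'' KM(1,2)] abn KM(3)
      have st: "card PY = k - 1" "card PX = n - k + 1" by auto
      hence Pn: "P = {..<n}" using fin_full cardP KM(3) by simp
      show ?thesis unfolding is_complete_bipartite_def
      proof (intro exI[of _ PY] conjI allI)
        show "PY \<subseteq> {..<n}" using Pn unfolding PY_def by auto
        show "card PY = k - 1" by (rule st(1))
        have "{..<n} - PY = PX" using Pn unfolding PX_def PY_def by auto
        thus "card ({..<n} - PY) = n - k + 1" using st(2) by simp
        fix u v show "E u v \<longleftrightarrow> (u < n \<and> v < n \<and> (u \<in> PY \<longleftrightarrow> v \<notin> PY))"
          using EP[of u v] Pn unfolding PY_def by auto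
      qed
    qed
  next
    assume cb: "is_complete_bipartite (k - 1) (n - k + 1) n E"
    have "adj_eigenvalue n E (sqrt (real (k - 1) * real (n - k + 1)))"
      by (rule cb_eig[OF cb]) (use assms(1) in auto)
    moreover have "real (k - 1) * real (n - k + 1) = real B" unfolding B_def by (simp only: of_nat_mult)
    ultimately have "sqrt (real B) \<in> Ss" unfolding Ss_def by simp
    hence "sqrt (real B) \<le> spec_radius n E" by (rule rho_ge)
    with up show "spec_radius n E = sqrt (real B)" by simp
  qed
  with up Breal show ?thesis by simp
qed

end
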